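(* For any integer $k$ and any $\epsilon>0$, there exist a prior $p$, a utility function $f$ and a policy $\pi$ that is greedy with respect to $f$ (and $p$) and selects $k$ elements, such that $\beta_\pi(f,p)=\epsilon$.
   Context: Finite ground set $V$, finite state set $Y$; a realization $\phi:V\to Y$ is drawn from prior $p$; $f:2^V\times\Phi_V\to\mathbb{R}$ is a utility function. A partial realization $\psi$ maps $\mathrm{dom}(\psi)\subseteq V$ to $Y$; $\phi\sim\psi$ means agreement on $\mathrm{dom}(\psi)$. A (possibly randomized) policy $\pi$ maps the observed partial realization to the next element to select or $\bot$ (terminate); $\psi_t$ denotes observations after $t$ selections; $E(\pi,\phi)$ is the set of selected elements; $c_{\mathrm{avg}}(\pi,p)=\mathbb{E}[|E(\pi,\phi)|]$. $\Delta^f_p(v\mid\psi)=\mathbb{E}[f(\{v\}\cup\mathrm{dom}(\psi),\phi)-f(\mathrm{dom}(\psi),\phi)\mid\phi\sim\psi]$. $\pi$ is greedy if for every $\psi$ with $\pi(\psi)\ne\bot$, $\Delta^f_p(\pi(\psi)\mid\psi)=\max_{v\in V}\Delta^f_p(v\mid\psi)$. A sub-policy of $\pi$ runs like $\pi$ but may terminate earlier. For $\tau\ge0,\rho\in[0,1]$, $\pi^{\tau,\rho}$ is the sub-policy of $\pi$ that with probability $\rho$ terminates as soon as every remaining element has expected marginal gain strictly smaller than $\tau$, and otherwise terminates as soon as every remaining element has expected marginal gain at most $\tau$. For each integer $i\le c_{\mathrm{avg}}(\pi,p)$, the sub-policy of this form with $c_{\mathrm{avg}}=i$ exists and is unique;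 denote it $\pi_i$. $\Delta^u_{\pi,i}$ is the smallest $u$ such that a.s., at termination time $t$ of $\pi_i$, $\Delta^f_p(v\mid\psi_t)\le u$ for all $v$; $\Delta^l_{\pi,i}$ is the largest $u$ such that a.s. for all $t$ until $\pi_i$ terminates, $\Delta^f_p(\pi_i(\psi_t)\mid\psi_t)\ge u$. The maximal gain ratio is $\beta_\pi(f,p)=\max_{i\in\mathbb{N},\,i\le c_{\mathrm{avg}}(\pi,p)}\Delta^u_{\pi,i}/\Delta^l_{\pi,i}$. *)

theory Defs
  imports "HOL-Probability.Probability"
begin

(* Realizations and partial
 realizations are partial maps nat <rightharpoonup> nat; a realization has domain exactly V.
 phi ~ psi (agreement on dom psi) is  psi <subseteq><^sub>m phi. *)

type_synonym prl = "nat \<rightharpoonup> nat"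

definition realizations :: "nat set \<Rightarrow> nat set \<Rightarrow> prl set" where
  "realizations V Y = {\<phi>. dom \<phi> = V \<and> ran \<phi> \<subseteq> Y}"

definition partial_realization :: "nat set \<Rightarrow> nat set \<Rightarrow> prl \<Rightarrow> bool" where
  "partial_realization V Y \<psi> \<longleftrightarrow> dom \<psi> \<subseteq> V \<and> ran \<psi> \<subseteq> Y"

definition is_prior :: "nat set \<Rightarrow> nat set \<Rightarrow> prl pmf \<Rightarrow> bool" where
  "is_prior V Y p \<longleftrightarrow> set_pmf p \<subseteq> realizations V Y"

definition cprob :: "prl pmf \<Rightarrow> prl \<Rightarrow> real" where
  "cprob p \<psi> = measure_pmf.prob p {\<phi>. \<psi> \<subseteq>\<^sub>m \<phi>}"

(* Expected marginal gain conditioned on phi ~ psi (set to 0 for psi of probability 0). *)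
definition gain :: "(nat set \<Rightarrow> prl \<Rightarrow> real) \<Rightarrow> prl pmf \<Rightarrow> nat \<Rightarrow> prl \<Rightarrow> real" where
  "gain f p v \<psi> =
     (if cprob p \<psi> = 0 then 0
      else measure_pmf.expectation p
             (\<lambda>\<phi>. if \<psi> \<subseteq>\<^sub>m \<phi> then f (insert v (dom \<psi>)) \<phi> - f (dom \<psi>) \<phi> else 0)
           / cprob p \<psi>)"

(* Execution of a deterministic rule (None = terminate) on realization phi. *)
definition step :: "(prl \<Rightarrow> nat option) \<Rightarrow> prl \<Rightarrow> prl \<Rightarrow> prl" where
  "step \<pi> \<phi> \<psi> = (case \<pi> \<psi> of None \<Rightarrow> \<psi> | Some v \<Rightarrow> \<psi>(v := \<phi> v))"

definition state :: "(prl \<Rightarrow> nat option) \<Rightarrow> prl \<Rightarrow> nat \<Rightarrow> prl" where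
  "state \<pi> \<phi> t = (step \<pi> \<phi> ^^ t) Map.empty"

definition stop_time :: "(prl \<Rightarrow> nat option) \<Rightarrow> prl \<Rightarrow> nat" where
  "stop_time \<pi> \<phi> = (LEAST t. \<pi> (state \<pi> \<phi> t) = None)"

definition final_state :: "(prl \<Rightarrow> nat option) \<Rightarrow> prl \<Rightarrow> prl" where
  "final_state \<pi> \<phi> = state \<pi> \<phi> (stop_time \<pi> \<phi>)"

definition selected :: "(prl \<Rightarrow> nat option) \<Rightarrow> prl \<Rightarrow> nat set" where
  "selected \<pi> \<phi> = dom (final_state \<pi> \<phi>)"

(* A (possibly randomized) policy: a seed distribution q and a rule
 <pi> r <psi> for each seed r. Valid: it only selects new elements of V. *)
definition valid_policy :: "nat set \<Rightarrow> ('s \<Rightarrow> prl \<Rightarrow> nat option) \<Rightarrow> bool" where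
  "valid_policy V \<pi> \<longleftrightarrow> (\<forall>r \<psi> v. \<pi> r \<psi> = Some v \<longrightarrow> v \<in> V \<and> v \<notin> dom \<psi>)"

definition c_avg :: "prl pmf \<Rightarrow> 's pmf \<Rightarrow> ('s \<Rightarrow> prl \<Rightarrow> nat option) \<Rightarrow> real" where
  "c_avg p q \<pi> = measure_pmf.expectation (pair_pmf q p)
                    (\<lambda>(r, \<phi>). real (card (selected (\<pi> r) \<phi>)))"

definition greedy :: "nat set \<Rightarrow> nat set \<Rightarrow> (nat set \<Rightarrow> prl \<Rightarrow> real) \<Rightarrow> prl pmf
                       \<Rightarrow> ('s \<Rightarrow> prl \<Rightarrow> nat option) \<Rightarrow> bool" where
  "greedy V Y f p \<pi> \<longleftrightarrow>
     (\<forall>r \<psi> v. partial_realization V Y \<psi> \<and> \<pi> r \<psi> = Some v \<longrightarrow>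
        gain f p v \<psi> = Max ((\<lambda>w. gain f p w \<psi>) ` V))"

(* The sub-policy pi^{tau,rho}: an extra coin b ~ Bernoulli(rho) is drawn at the start;
 if b, stop as soon as all remaining elements have gain < tau, otherwise as soon as
 all have gain <= tau (and, in any case, stop when pi stops). *)
definition sub_seed :: "'s pmf \<Rightarrow> real \<Rightarrow> ('s \<times> bool) pmf" where
  "sub_seed q \<rho> = pair_pmf q (bernoulli_pmf \<rho>)"

definition sub_rule :: "nat set \<Rightarrow> (nat set \<Rightarrow> prl \<Rightarrow> real) \<Rightarrow> prl pmf
      \<Rightarrow> ('s \<Rightarrow> prl \<Rightarrow> nat option) \<Rightarrow> real \<Rightarrow> ('s \<times> bool) \<Rightarrow> prl \<Rightarrow> nat option" where
  "sub_rule V f p \<pi> \<tau> rb \<psi> =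
     (if (if snd rb then (\<forall>v \<in> V - dom \<psi>. gain f p v \<psi> < \<tau>)
                    else (\<forall>v \<in> V - dom \<psi>. gain f p v \<psi> \<le> \<tau>))
      then None else \<pi> (fst rb) \<psi>)"

definition ith_params :: "nat set \<Rightarrow> (nat set \<Rightarrow> prl \<Rightarrow> real) \<Rightarrow> prl pmf \<Rightarrow> 's pmf
      \<Rightarrow> ('s \<Rightarrow> prl \<Rightarrow> nat option) \<Rightarrow> nat \<Rightarrow> real \<times> real" where
  "ith_params V f p q \<pi> i =
     (SOME (\<tau>, \<rho>). 0 \<le> \<tau> \<and> 0 \<le> \<rho> \<and> \<rho> \<le> 1 \<and>
        c_avg p (sub_seed q \<rho>) (sub_rule V f p \<pi> \<tau>) = real i)"

definition Delta_u :: "nat set \<Rightarrow> (nat set \<Rightarrow> prl \<Rightarrow> real) \<Rightarrow> prl pmf \<Rightarrow> 'r pmf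
      \<Rightarrow> ('r \<Rightarrow> prl \<Rightarrow> nat option) \<Rightarrow> real" where
  "Delta_u V f p q \<sigma> = Inf {u. AE x in measure_pmf (pair_pmf q p).
       \<forall>v \<in> V. gain f p v (final_state (\<sigma> (fst x)) (snd x)) \<le> u}"

definition Delta_l :: "(nat set \<Rightarrow> prl \<Rightarrow> real) \<Rightarrow> prl pmf \<Rightarrow> 'r pmf
      \<Rightarrow> ('r \<Rightarrow> prl \<Rightarrow> nat option) \<Rightarrow> real" where
  "Delta_l f p q \<sigma> = Sup {u. AE x in measure_pmf (pair_pmf q p).
       \<forall>t < stop_time (\<sigma> (fst x)) (snd x).
          u \<le> gain f p (the (\<sigma> (fst x) (state (\<sigma> (fst x)) (snd x) t)))
                       (state (\<sigma> (fst x)) (snd x) t)}"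

definition Delta_u_i :: "nat set \<Rightarrow> (nat set \<Rightarrow> prl \<Rightarrow> real) \<Rightarrow> prl pmf \<Rightarrow> 's pmf
      \<Rightarrow> ('s \<Rightarrow> prl \<Rightarrow> nat option) \<Rightarrow> nat \<Rightarrow> real" where
  "Delta_u_i V f p q \<pi> i = (case ith_params V f p q \<pi> i of (\<tau>, \<rho>) \<Rightarrow>
      Delta_u V f p (sub_seed q \<rho>) (sub_rule V f p \<pi> \<tau>))"

definition Delta_l_i :: "nat set \<Rightarrow> (nat set \<Rightarrow> prl \<Rightarrow> real) \<Rightarrow> prl pmf \<Rightarrow> 's pmf
      \<Rightarrow> ('s \<Rightarrow> prl \<Rightarrow> nat option) \<Rightarrow> nat \<Rightarrow> real" where
  "Delta_l_i V f p q \<pi> i = (case ith_params V f p q \<pi> i of (\<tau>, \<rho>) \<Rightarrow>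
      Delta_l f p (sub_seed q \<rho>) (sub_rule V f p \<pi> \<tau>))"

definition max_gain_ratio :: "nat set \<Rightarrow> (nat set \<Rightarrow> prl \<Rightarrow> real) \<Rightarrow> prl pmf \<Rightarrow> 's pmf
      \<Rightarrow> ('s \<Rightarrow> prl \<Rightarrow> nat option) \<Rightarrow> real" where
  "max_gain_ratio V f p q \<pi> =
     Max {Delta_u_i V f p q \<pi> i / Delta_l_i V f p q \<pi> i | i. 1 \<le> i \<and> real i \<le> c_avg p q \<pi>}"

end

theory Submission
  imports Defs
begin

locale ex7 =
  fixes k :: nat and e :: real
  assumes k1: "1 \<le> k" and e0: "e > 0"
begin

definition a :: real where "a = min e (1/2)"
definition c :: real where "c = e * a^(k-1)"
definition VV :: "nat set" where "VV = {..k}"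
definition phi0 :: prl where "phi0 = (\<lambda>v. if v \<le> k then Some 0 else None)"
definition st :: "nat \<Rightarrow> prl" where "st t = (\<lambda>v. if v < t then Some 0 else None)"
definition g :: "nat set \<Rightarrow> real" where
  "g S = (\<Sum>v<k. if v \<in> S then a^v else 0) + (if k \<in> S \<and> {..<k} \<subseteq> S then c else 0)"
definition ff :: "nat set \<Rightarrow> prl \<Rightarrow> real" where "ff S \<phi> = g S"
definition pp :: "prl pmf" where "pp = return_pmf phi0"
definition qq :: "nat pmf" where "qq = return_pmf 0"
definition pol :: "nat \<Rightarrow> prl \<Rightarrow> nat option" where
  "pol r \<psi> = (if dom \<psi> = {..<card (dom \<psi>)} \<and> card (dom \<psi>) < k then Some (card (dom \<psi>)) else None)"

lemma a_pos: "a > 0" and a_lt1: "a < 1" and a_le_e: "a \<le> e"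
  using e0 by (auto simp: a_def)

lemma c_pos: "c > 0" using e0 a_pos by (simp add: c_def)

lemma gain_eq: "gain ff pp v \<psi> = (if \<psi> \<subseteq>\<^sub>m phi0 then g (insert v (dom \<psi>)) - g (dom \<psi>) else 0)"
  by (simp add: gain_def cprob_def pp_def ff_def)

lemma g_ins: "v < k \<Longrightarrow> v \<notin> S \<Longrightarrow> k \<notin> S \<Longrightarrow> g (insert v S) = g S + a^v"
proof -
  assume h: "v < k" "v \<notin> S" "k \<notin> S"
  have "(\<Sum>w<k. if w \<in> insert v S then a^w else 0) = (\<Sum>w<k. (if w \<in> S then a^w else 0) + (if w = v then a^w else 0))"
    by (rule sum.cong) (use h in auto)
  also have "\<dots> = (\<Sum>w<k. if w \<in> S then a^w else 0) + a^v"
    using h by (simp add: sum.distrib)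
  finally show ?thesis using h by (simp add: g_def)
qed

lemma st_le: "t \<le> Suc k \<Longrightarrow> st t \<subseteq>\<^sub>m phi0"
  by (auto simp: map_le_def st_def phi0_def dom_def split: if_splits)

lemma dom_st: "dom (st t) = {..<t}"
  by (auto simp: st_def dom_def)

lemma gain_st: "t \<le> k \<Longrightarrow> v \<le> k \<Longrightarrow>
  gain ff pp v (st t) = (if v < t then 0 else if v < k then a^v else if t = k then c else 0)"
proof -
  assume h: "t \<le> k" "v \<le> k"
  have le: "st t \<subseteq>\<^sub>m phi0" using h by (intro st_le) auto
  show ?thesis
  proof (cases "v < t")
    case True then show ?thesis using le by (simp add: gain_eq dom_st insert_absorb)
  next
    case F: False
    show ?thesis
    proof (cases "v < k")
      case True then show ?thesis using le F h by (simp add: gain_eq dom_st g_ins)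
    next
      case False
      then have vk: "v = k" using h by auto
      show ?thesis
      proof (cases "t = k")
        case True
        have "(\<Sum>w<k. if w \<in> insert k {..<k} then a^w else 0) = (\<Sum>w<k. if w \<in> {..<k} then a^w else 0)"
          by (rule sum.cong) auto
        moreover have "{..<k} \<subseteq> insert k {..<k}" by auto
        ultimately show ?thesis using le True vk by (simp add: gain_eq dom_st g_def)
      next
        case False
        then have tk: "t < k" using h by auto
        have "(\<Sum>w<k. if w \<in> insert k {..<t} then a^w else 0) = (\<Sum>w<k. if w \<in> {..<t} then a^w else 0)"
          by (rule sum.cong) auto
        moreover have "\<not> {..<k} \<subseteq> insert k {..<t}" using tk by auto
        ultimately show ?thesis using le False vk tk by (simp add: gain_eq dom_st g_def)
      qed
    qed
  qed
qed


lemma run: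
  assumes T: "T \<le> k" and s: "\<And>t. t < T \<Longrightarrow> \<sigma> (st t) = Some t" and n: "\<sigma> (st T) = None"
  shows "\<And>t. t \<le> T \<Longrightarrow> state \<sigma> phi0 t = st t" and "stop_time \<sigma> phi0 = T"
    and "final_state \<sigma> phi0 = st T"
proof -
  show stt: "state \<sigma> phi0 t = st t" if "t \<le> T" for t
    using that
  proof (induction t)
    case 0 then show ?case by (simp add: state_def st_def)
  next
    case (Suc t)
    then have tT: "t < T" by auto
    have "state \<sigma> phi0 (Suc t) = step \<sigma> phi0 (state \<sigma> phi0 t)" by (simp add: state_def)
    also have "\<dots> = st (Suc t)" using Suc tT s[OF tT] T
      by (auto simp: step_def st_def phi0_def)
    finally show ?case .
  qed
  show st2: "stop_time \<sigma> phi0 = T"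
    unfolding stop_time_def
  proof (rule Least_equality)
    show "\<sigma> (state \<sigma> phi0 T) = None" using stt[of T] n by simp
    fix y assume "\<sigma> (state \<sigma> phi0 y) = None"
    then show "T \<le> y" using stt s by (metis linorder_not_le option.distinct(1) order_less_imp_le)
  qed
  show "final_state \<sigma> phi0 = st T" using stt st2 by (simp add: final_state_def)
qed

lemma pol_st: "t \<le> k \<Longrightarrow> pol r (st t) = (if t < k then Some t else None)"
  by (simp add: pol_def dom_st)

definition P :: "bool \<Rightarrow> real \<Rightarrow> nat \<Rightarrow> bool" where
  "P b \<tau> t = (if b then a^t < \<tau> else a^t \<le> \<tau>)"

definition TT :: "bool \<Rightarrow> real \<Rightarrow> nat" where
  "TT b \<tau> = (LEAST t. t = k \<or> P b \<tau> t)"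

abbreviation sr where "sr \<tau> \<equiv> sub_rule VV ff pp pol \<tau>"

lemma sr_st: "t \<le> k \<Longrightarrow> sr \<tau> (r, b) (st t) = (if t < k \<and> \<not> P b \<tau> t then Some t else None)"
proof -
  assume tk: "t \<le> k"
  show ?thesis
  proof (cases "t < k")
    case False then show ?thesis using tk by (simp add: sub_rule_def pol_st)
  next
    case True
    have gv: "gain ff pp v (st t) = (if v < k then a^v else 0)" if "v \<in> VV - dom (st t)" for v
      using that tk True by (auto simp: gain_st VV_def dom_st)
    have le: "a^v \<le> a^t" if "t \<le> v" for v using that a_pos a_lt1 by (simp add: power_decreasing)
    have tin: "t \<in> VV - dom (st t)" using True by (simp add: VV_def dom_st)
    have "(\<forall>v \<in> VV - dom (st t). gain ff pp v (st t) < \<tau>) \<longleftrightarrow> a^t < \<tau>"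
    proof
      assume h: "\<forall>v \<in> VV - dom (st t). gain ff pp v (st t) < \<tau>"
      have "gain ff pp t (st t) < \<tau>" using h tin by blast
      then show "a^t < \<tau>" using gv[OF tin] True by simp
    next
      assume h: "a^t < \<tau>"
      show "\<forall>v \<in> VV - dom (st t). gain ff pp v (st t) < \<tau>"
      proof
        fix v assume v: "v \<in> VV - dom (st t)"
        then have "t \<le> v" by (simp add: dom_st)
        then show "gain ff pp v (st t) < \<tau>" using gv[OF v] le h a_pos
          by (smt (verit) zero_less_power)
      qed
    qed
    moreover have "(\<forall>v \<in> VV - dom (st t). gain ff pp v (st t) \<le> \<tau>) \<longleftrightarrow> a^t \<le> \<tau>"
    proof
      assume h: "\<forall>v \<in> VV - dom (st t). gain ff pp v (st t) \<le> \<tau>"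
      have "gain ff pp t (st t) \<le> \<tau>" using h tin by blast
      then show "a^t \<le> \<tau>" using gv[OF tin] True by simp
    next
      assume h: "a^t \<le> \<tau>"
      show "\<forall>v \<in> VV - dom (st t). gain ff pp v (st t) \<le> \<tau>"
      proof
        fix v assume v: "v \<in> VV - dom (st t)"
        then have "t \<le> v" by (simp add: dom_st)
        then show "gain ff pp v (st t) \<le> \<tau>" using gv[OF v] le h a_pos
          by (smt (verit) zero_less_power)
      qed
    qed
    ultimately show ?thesis using True tk by (simp add: sub_rule_def pol_st P_def)
  qed
qed

lemma TT_le: "TT b \<tau> \<le> k"
  unfolding TT_def by (rule Least_le) simp

lemma TT_less: "t < TT b \<tau> \<Longrightarrow> t < k \<and> \<not> P b \<tau> t"
  unfolding TT_def by (metis (mono_tags, lifting) TT_def TT_le not_less_Least order_less_le_trans)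

lemma TT_at: "TT b \<tau> = k \<or> P b \<tau> (TT b \<tau>)"
  unfolding TT_def by (rule LeastI[of _ k]) simp

lemma run_sr:
  "stop_time (sr \<tau> (r,b)) phi0 = TT b \<tau>" "final_state (sr \<tau> (r,b)) phi0 = st (TT b \<tau>)"
  "\<And>t. t \<le> TT b \<tau> \<Longrightarrow> state (sr \<tau> (r,b)) phi0 t = st t"
  "\<And>t. t < TT b \<tau> \<Longrightarrow> sr \<tau> (r,b) (st t) = Some t"
proof -
  have A: "\<And>t. t < TT b \<tau> \<Longrightarrow> sr \<tau> (r,b) (st t) = Some t"
    using TT_less TT_le by (simp add: sr_st less_imp_le)
  have B: "sr \<tau> (r,b) (st (TT b \<tau>)) = None"
    using TT_at[of b \<tau>] TT_le[of b \<tau>] by (auto simp: sr_st)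
  show "stop_time (sr \<tau> (r,b)) phi0 = TT b \<tau>" "final_state (sr \<tau> (r,b)) phi0 = st (TT b \<tau>)"
    "\<And>t. t \<le> TT b \<tau> \<Longrightarrow> state (sr \<tau> (r,b)) phi0 t = st t"
    using run[OF TT_le A B] by auto
  show "\<And>t. t < TT b \<tau> \<Longrightarrow> sr \<tau> (r,b) (st t) = Some t" by (rule A)
qed

lemma card_sel_sr: "card (selected (sr \<tau> (r,b)) phi0) = TT b \<tau>"
  by (simp add: selected_def run_sr dom_st)

lemma TT_rel: "TT False \<tau> \<le> TT True \<tau>" "TT True \<tau> \<le> Suc (TT False \<tau>)"
proof -
  show "TT False \<tau> \<le> TT True \<tau>"
    unfolding TT_def[of False]
    by (rule Least_le) (use TT_at[of True \<tau>] in \<open>auto simp: P_def\<close>)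
  show "TT True \<tau> \<le> Suc (TT False \<tau>)"
  proof (cases "TT False \<tau> = k \<or> Suc (TT False \<tau>) = k")
    case True then show ?thesis using TT_le[of True \<tau>] by auto
  next
    case False
    then have "P False \<tau> (TT False \<tau>)" using TT_at[of False \<tau>] by auto
    moreover have "a * a ^ TT False \<tau> < 1 * a ^ TT False \<tau>"
      using a_pos a_lt1 by (intro mult_strict_right_mono) auto
    ultimately have "P True \<tau> (Suc (TT False \<tau>))" by (auto simp: P_def)
    then show ?thesis unfolding TT_def[of True] by (intro Least_le) auto
  qed
qed

lemma c_avg_sr: "0 \<le> \<rho> \<Longrightarrow> \<rho> \<le> 1 \<Longrightarrow>
  c_avg pp (sub_seed qq \<rho>) (sr \<tau>) = \<rho> * TT True \<tau> + (1 - \<rho>) * TT False \<tau>"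
proof -
  assume r: "0 \<le> \<rho>" "\<rho> \<le> 1"
  let ?A = "{((0::nat,True),phi0), ((0,False),phi0)}"
  have "c_avg pp (sub_seed qq \<rho>) (sr \<tau>) =
     (\<Sum>x\<in>?A. pmf (pair_pmf (sub_seed qq \<rho>) pp) x *\<^sub>R (case x of (r, \<phi>) \<Rightarrow> real (card (selected (sr \<tau> r) \<phi>))))"
    unfolding c_avg_def
    by (rule integral_measure_pmf) (auto simp: sub_seed_def qq_def pp_def)
  also have "\<dots> = \<rho> * TT True \<tau> + (1 - \<rho>) * TT False \<tau>"
    using r by (simp add: pmf_pair sub_seed_def qq_def card_sel_sr) (simp add: pp_def)
  finally show ?thesis .
qed

lemma all_i:
  assumes r: "0 \<le> \<rho>" "\<rho> \<le> 1" and ca: "c_avg pp (sub_seed qq \<rho>) (sr \<tau>) = real i"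
    and b: "b \<in> set_pmf (bernoulli_pmf \<rho>)"
  shows "TT b \<tau> = i"
proof -
  have eq: "\<rho> * TT True \<tau> + (1 - \<rho>) * TT False \<tau> = real i" using ca c_avg_sr[OF r] by simp
  have pb: "pmf (bernoulli_pmf \<rho>) b \<noteq> 0" using b by (simp add: set_pmf_iff)
  show ?thesis
  proof (cases "TT True \<tau> = TT False \<tau>")
    case True
    then have "real (TT False \<tau>) = real i" using eq by (simp add: algebra_simps)
    then show ?thesis using True by (cases b) auto
  next
    case False
    then have s: "TT True \<tau> = Suc (TT False \<tau>)" using TT_rel[of \<tau>] by auto
    then have eq2: "real (TT False \<tau>) + \<rho> = real i" using eq by (simp add: algebra_simps)
    have "\<rho> = 0 \<or> \<rho> = 1"
    proof (rule ccontr)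
      assume "\<not> (\<rho> = 0 \<or> \<rho> = 1)"
      then have "0 < \<rho>" "\<rho> < 1" using r by auto
      then have "TT False \<tau> < i" "i < Suc (TT False \<tau>)" using eq2 by linarith+
      then show False by simp
    qed
    then show ?thesis
    proof
      assume "\<rho> = 0"
      then show ?thesis using pb eq2 by (cases b) auto
    next
      assume "\<rho> = 1"
      then show ?thesis using pb eq2 s by (cases b) auto
    qed
  qed
qed


definition G :: "nat \<Rightarrow> real" where "G i = (if i < k then a^i else c)"

lemma gain_bound: "i \<le> k \<Longrightarrow> (\<forall>v\<in>VV. gain ff pp v (st i) \<le> u) \<longleftrightarrow> G i \<le> u"
proof -
  assume ik: "i \<le> k"
  have up: "gain ff pp v (st i) \<le> G i" if "v \<in> VV" for v
    using that ik a_pos a_lt1 c_pos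
    by (auto simp: gain_st VV_def G_def power_decreasing less_imp_le)
  have att: "\<exists>v\<in>VV. gain ff pp v (st i) = G i"
  proof (cases "i < k")
    case True then show ?thesis using ik by (intro bexI[of _ i]) (auto simp: gain_st VV_def G_def)
  next
    case False then show ?thesis using ik by (intro bexI[of _ k]) (auto simp: gain_st VV_def G_def)
  qed
  show ?thesis using up att by force
qed

lemma Max_gain: "i \<le> k \<Longrightarrow> Max ((\<lambda>w. gain ff pp w (st i)) ` VV) = G i"
proof -
  assume ik: "i \<le> k"
  show ?thesis
  proof (rule Max_eqI)
    show "finite ((\<lambda>w. gain ff pp w (st i)) ` VV)" by (simp add: VV_def)
    show "y \<le> G i" if "y \<in> (\<lambda>w. gain ff pp w (st i)) ` VV" for y
      using that gain_bound[OF ik, of "G i"] by auto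
    show "G i \<in> (\<lambda>w. gain ff pp w (st i)) ` VV"
    proof (cases "i < k")
      case True then show ?thesis using ik by (intro image_eqI[of _ _ i]) (auto simp: gain_st VV_def G_def)
    next
      case False then show ?thesis using ik by (intro image_eqI[of _ _ k]) (auto simp: gain_st VV_def G_def)
    qed
  qed
qed

lemma spp: "set_pmf pp = {phi0}" by (simp add: pp_def)

lemma Du:
  assumes i: "1 \<le> i" "i \<le> k" and r: "0 \<le> \<rho>" "\<rho> \<le> 1"
    and ca: "c_avg pp (sub_seed qq \<rho>) (sr \<tau>) = real i"
  shows "Delta_u VV ff pp (sub_seed qq \<rho>) (sr \<tau>) = G i"
proof -
  have ne: "set_pmf (bernoulli_pmf \<rho>) \<noteq> {}" by (rule set_pmf_not_empty)
  have "(AE x in measure_pmf (pair_pmf (sub_seed qq \<rho>) pp).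
       \<forall>v \<in> VV. gain ff pp v (final_state (sr \<tau> (fst x)) (snd x)) \<le> u) \<longleftrightarrow> G i \<le> u" for u
  proof -
    have "(AE x in measure_pmf (pair_pmf (sub_seed qq \<rho>) pp).
       \<forall>v \<in> VV. gain ff pp v (final_state (sr \<tau> (fst x)) (snd x)) \<le> u) \<longleftrightarrow>
       (\<forall>b\<in>set_pmf (bernoulli_pmf \<rho>). \<forall>v \<in> VV. gain ff pp v (st i) \<le> u)"
      using all_i[OF r ca] by (simp add: AE_measure_pmf_iff spp sub_seed_def qq_def run_sr)
    also have "\<dots> \<longleftrightarrow> G i \<le> u" using ne gain_bound[OF i(2)] by auto
    finally show ?thesis .
  qed
  then have "{u. AE x in measure_pmf (pair_pmf (sub_seed qq \<rho>) pp).
       \<forall>v \<in> VV. gain ff pp v (final_state (sr \<tau> (fst x)) (snd x)) \<le> u} = {G i..}" by auto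
  then show ?thesis by (simp add: Delta_u_def)
qed

lemma Dl:
  assumes i: "1 \<le> i" "i \<le> k" and r: "0 \<le> \<rho>" "\<rho> \<le> 1"
    and ca: "c_avg pp (sub_seed qq \<rho>) (sr \<tau>) = real i"
  shows "Delta_l ff pp (sub_seed qq \<rho>) (sr \<tau>) = a^(i-1)"
proof -
  have ne: "set_pmf (bernoulli_pmf \<rho>) \<noteq> {}" by (rule set_pmf_not_empty)
  have key: "(\<forall>t<i. u \<le> a^t) \<longleftrightarrow> u \<le> a^(i-1)" for u
  proof
    assume "\<forall>t<i. u \<le> a^t" then show "u \<le> a^(i-1)" using i by auto
  next
    assume h: "u \<le> a^(i-1)"
    show "\<forall>t<i. u \<le> a^t"
    proof (intro allI impI)
      fix t assume "t < i"
      then have "a^(i-1) \<le> a^t" using a_pos a_lt1 by (intro power_decreasing) auto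
      then show "u \<le> a^t" using h by simp
    qed
  qed
  have "(AE x in measure_pmf (pair_pmf (sub_seed qq \<rho>) pp).
       \<forall>t < stop_time (sr \<tau> (fst x)) (snd x).
          u \<le> gain ff pp (the (sr \<tau> (fst x) (state (sr \<tau> (fst x)) (snd x) t)))
                       (state (sr \<tau> (fst x)) (snd x) t)) \<longleftrightarrow> u \<le> a^(i-1)" for u
  proof -
    have g: "gain ff pp t (st t) = a^t" if "t < i" for t
      using that i by (simp add: gain_st)
    have "(AE x in measure_pmf (pair_pmf (sub_seed qq \<rho>) pp).
       \<forall>t < stop_time (sr \<tau> (fst x)) (snd x).
          u \<le> gain ff pp (the (sr \<tau> (fst x) (state (sr \<tau> (fst x)) (snd x) t)))
                       (state (sr \<tau> (fst x)) (snd x) t)) \<longleftrightarrow>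
       (\<forall>b\<in>set_pmf (bernoulli_pmf \<rho>). \<forall>t<i. u \<le> gain ff pp t (st t))"
      using all_i[OF r ca] by (auto simp: AE_measure_pmf_iff spp sub_seed_def qq_def run_sr)
    also have "\<dots> \<longleftrightarrow> (\<forall>t<i. u \<le> a^t)" using ne g by auto
    finally show ?thesis using key by simp
  qed
  then have "{u. AE x in measure_pmf (pair_pmf (sub_seed qq \<rho>) pp).
       \<forall>t < stop_time (sr \<tau> (fst x)) (snd x).
          u \<le> gain ff pp (the (sr \<tau> (fst x) (state (sr \<tau> (fst x)) (snd x) t)))
                       (state (sr \<tau> (fst x)) (snd x) t)} = {..a^(i-1)}" by auto
  then show ?thesis by (simp add: Delta_l_def)
qed

lemma TT_exact: "i \<le> k \<Longrightarrow> TT False (a^i) = i"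
  unfolding TT_def
proof (rule Least_equality)
  show "i = k \<or> P False (a^i) i" by (simp add: P_def)
  fix y assume "i \<le> k" "y = k \<or> P False (a ^ i) y"
  then show "i \<le> y"
    using a_pos a_lt1 by (auto simp: P_def power_strict_decreasing_iff not_less[symmetric])
qed

lemma params:
  assumes i: "1 \<le> i" "i \<le> k" and eq: "ith_params VV ff pp qq pol i = (\<tau>, \<rho>)"
  shows "0 \<le> \<tau> \<and> 0 \<le> \<rho> \<and> \<rho> \<le> 1 \<and> c_avg pp (sub_seed qq \<rho>) (sr \<tau>) = real i"
proof -
  let ?Q = "\<lambda>x. case x of (\<tau>, \<rho>) \<Rightarrow> 0 \<le> \<tau> \<and> 0 \<le> \<rho> \<and> \<rho> \<le> 1 \<and>
        c_avg pp (sub_seed qq \<rho>) (sr \<tau>) = real i"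
  have ex: "\<exists>x. ?Q x"
    using c_avg_sr[of 0 "a^i"] TT_exact[OF i(2)] a_pos
    by (intro exI[of _ "(a^i, 0)"]) simp
  have "?Q (ith_params VV ff pp qq pol i)"
    unfolding ith_params_def by (rule someI_ex[OF ex])
  then show ?thesis using eq by simp
qed

lemma ratio_i: "1 \<le> i \<Longrightarrow> i \<le> k \<Longrightarrow>
  Delta_u_i VV ff pp qq pol i / Delta_l_i VV ff pp qq pol i = (if i < k then a else e)"
proof -
  assume i: "1 \<le> i" "i \<le> k"
  obtain \<tau> \<rho> where eq: "ith_params VV ff pp qq pol i = (\<tau>, \<rho>)" by (cases "ith_params VV ff pp qq pol i")
  note pr = params[OF i eq]
  have "Delta_u_i VV ff pp qq pol i = G i" using Du[OF i] pr eq by (simp add: Delta_u_i_def)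
  moreover have "Delta_l_i VV ff pp qq pol i = a^(i-1)" using Dl[OF i] pr eq by (simp add: Delta_l_i_def)
  moreover have "a^i = a * a^(i-1)" using i by (metis Suc_diff_le diff_Suc_1 power_Suc)
  ultimately show ?thesis using a_pos i by (auto simp: G_def c_def)
qed

lemma run_pol: "final_state (pol r) phi0 = st k"
proof -
  have A: "\<And>t. t < k \<Longrightarrow> pol r (st t) = Some t" by (simp add: pol_st)
  have B: "pol r (st k) = None" by (simp add: pol_st)
  show ?thesis using run[OF order_refl A B] by auto
qed

lemma card_pol: "card (selected (pol r) phi0) = k"
  by (simp add: selected_def run_pol dom_st)

lemma c_avg_pol: "c_avg pp qq pol = k"
proof -
  have "c_avg pp qq pol = (\<Sum>x\<in>{(0::nat, phi0)}. pmf (pair_pmf qq pp) x *\<^sub>R (case x of (r, \<phi>) \<Rightarrow> real (card (selected (pol r) \<phi>))))"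
    unfolding c_avg_def by (rule integral_measure_pmf) (auto simp: qq_def spp)
  also have "\<dots> = k" by (simp add: pmf_pair qq_def pp_def card_pol)
  finally show ?thesis .
qed

lemma mgr: "max_gain_ratio VV ff pp qq pol = e"
proof -
  have S: "{Delta_u_i VV ff pp qq pol i / Delta_l_i VV ff pp qq pol i | i. 1 \<le> i \<and> real i \<le> c_avg pp qq pol}
    = (\<lambda>i. if i < k then a else e) ` {1..k}"
  proof (rule set_eqI, rule iffI)
    fix x assume "x \<in> {Delta_u_i VV ff pp qq pol i / Delta_l_i VV ff pp qq pol i | i. 1 \<le> i \<and> real i \<le> c_avg pp qq pol}"
    then obtain i where "x = Delta_u_i VV ff pp qq pol i / Delta_l_i VV ff pp qq pol i" "1 \<le> i" "i \<le> k"
      by (auto simp: c_avg_pol)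
    then show "x \<in> (\<lambda>i. if i < k then a else e) ` {1..k}"
      by (intro image_eqI[of _ _ i]) (simp_all add: ratio_i)
  next
    fix x assume "x \<in> (\<lambda>i. if i < k then a else e) ` {1..k}"
    then obtain i where "x = (if i < k then a else e)" "1 \<le> i" "i \<le> k" by (auto simp del: if_image_distrib)
    then show "x \<in> {Delta_u_i VV ff pp qq pol i / Delta_l_i VV ff pp qq pol i | i. 1 \<le> i \<and> real i \<le> c_avg pp qq pol}"
      by (intro CollectI exI[of _ i]) (simp add: ratio_i c_avg_pol)
  qed
  show ?thesis unfolding max_gain_ratio_def S
  proof (rule Max_eqI)
    show "finite ((\<lambda>i. if i < k then a else e) ` {1..k})" by simp
    show "y \<le> e" if "y \<in> (\<lambda>i. if i < k then a else e) ` {1..k}" for y using that a_le_e by auto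
    show "e \<in> (\<lambda>i. if i < k then a else e) ` {1..k}" using k1 by (intro image_eqI[of _ _ k]) auto
  qed
qed

lemma greedy_pol: "greedy VV {0} ff pp pol"
  unfolding greedy_def
proof (intro allI impI)
  fix r \<psi> v assume h: "partial_realization VV {0} \<psi> \<and> pol r \<psi> = Some v"
  define n where "n = card (dom \<psi>)"
  have d: "dom \<psi> = {..<n}" and nk: "n < k" and vn: "v = n" using h
    by (auto simp: pol_def n_def split: if_splits)
  have "\<psi> = st n"
  proof
    fix x show "\<psi> x = st n x"
    proof (cases "x < n")
      case True
      then obtain y where y: "\<psi> x = Some y" using d by auto
      then have "y \<in> ran \<psi>" by (auto simp: ran_def)
      then have "y = 0" using h by (auto simp: partial_realization_def)
      then show ?thesis using y True by (simp add: st_def)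
    next
      case False then show ?thesis using d by (auto simp: st_def)
    qed
  qed
  then show "gain ff pp v \<psi> = Max ((\<lambda>w. gain ff pp w \<psi>) ` VV)"
    using nk vn by (simp add: Max_gain gain_st G_def)
qed

lemma main: "finite VV \<and> finite {0::nat} \<and> is_prior VV {0} pp \<and>
           valid_policy VV pol \<and> greedy VV {0} ff pp pol \<and>
           (AE x in measure_pmf (pair_pmf qq pp). card (selected (pol (fst x)) (snd x)) = k) \<and>
           max_gain_ratio VV ff pp qq pol = e"
proof (intro conjI)
  show "finite VV" by (simp add: VV_def)
  show "finite {0::nat}" by simp
  show "is_prior VV {0} pp"
    by (auto simp: is_prior_def spp realizations_def VV_def phi0_def ran_def dom_def split: if_splits)
  show "valid_policy VV pol"
    by (auto simp: valid_policy_def pol_def VV_def split: if_splits)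
  show "greedy VV {0} ff pp pol" by (rule greedy_pol)
  show "AE x in measure_pmf (pair_pmf qq pp). card (selected (pol (fst x)) (snd x)) = k"
    by (simp add: AE_measure_pmf_iff spp qq_def card_pol)
  show "max_gain_ratio VV ff pp qq pol = e" by (rule mgr)
qed

end

theorem theorem7:
  fixes k :: nat and \<epsilon> :: real
  assumes "1 \<le> k" and "\<epsilon> > 0"
  shows "\<exists>(V :: nat set) (Y :: nat set) (p :: prl pmf) (f :: nat set \<Rightarrow> prl \<Rightarrow> real)
            (q :: nat pmf) (\<pi> :: nat \<Rightarrow> prl \<Rightarrow> nat option).
           finite V \<and> finite Y \<and> is_prior V Y p \<and>
           valid_policy V \<pi> \<and> greedy V Y f p \<pi> \<and>
           (AE x in measure_pmf (pair_pmf q p). card (selected (\<pi> (fst x)) (snd x)) = k) \<and>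
           max_gain_ratio V f p q \<pi> = \<epsilon>"
proof -
  interpret ex7 k \<epsilon> using assms by unfold_locales
  show ?thesis using main by blast
qed

end
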